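(* Let $t\ge 2$ be an integer and let $M$ be a $t$-spike of order at least $4t-4$. Then $M$ is $(2t-1)$-connected.
   Context: For a positive integer $t$, a matroid $M$ is a $t$-spike of order $r$ (where $r\ge t$) if there is a partition $(A_1,\ldots,A_r)$ of $E(M)$ into 2-element sets such that, for every $t$-element subset $J\subseteq\{1,\dots,r\}$, the set $\bigcup_{j\in J}A_j$ is both a circuit and a cocircuit of $M$. The connectivity function of $M$ with ground set $E$ is $\lambda(X)=r(X)+r(E-X)-r(M)$. A partition $(X,E-X)$ is a $k$-separation if $\lambda(X)<k$, $|X|\ge k$ and $|E-X|\ge k$; $M$ is $n$-connected if it has no $k$-separation for any $k<n$. *)

theory Defs
  imports Main
begin

definition matroid :: "'a set \<Rightarrow> ('a set \<Rightarrow> bool) \<Rightarrow> bool" where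
  "matroid E indep \<longleftrightarrow> finite E
     \<and> (\<forall>X. indep X \<longrightarrow> X \<subseteq> E)
     \<and> indep {}
     \<and> (\<forall>X Y. indep Y \<and> X \<subseteq> Y \<longrightarrow> indep X)
     \<and> (\<forall>X Y. indep X \<and> indep Y \<and> card X < card Y \<longrightarrow> (\<exists>e\<in>Y - X. indep (insert e X)))"

definition mrank :: "('a set \<Rightarrow> bool) \<Rightarrow> 'a set \<Rightarrow> nat" where
  "mrank indep X = Max {card I | I. I \<subseteq> X \<and> indep I}"

definition mbasis :: "('a set \<Rightarrow> bool) \<Rightarrow> 'a set \<Rightarrow> bool" where
  "mbasis indep B \<longleftrightarrow> indep B \<and> (\<forall>X. indep X \<and> B \<subseteq> X \<longrightarrow> X = B)"

definition mcircuit :: "'a set \<Rightarrow> ('a set \<Rightarrow> bool) \<Rightarrow> 'a set \<Rightarrow> bool" where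
  "mcircuit E indep C \<longleftrightarrow> C \<subseteq> E \<and> \<not> indep C \<and> (\<forall>D. D \<subset> C \<longrightarrow> indep D)"

definition dual_indep :: "'a set \<Rightarrow> ('a set \<Rightarrow> bool) \<Rightarrow> 'a set \<Rightarrow> bool" where
  "dual_indep E indep X \<longleftrightarrow> X \<subseteq> E \<and> (\<exists>B. mbasis indep B \<and> X \<subseteq> E - B)"

definition mcocircuit :: "'a set \<Rightarrow> ('a set \<Rightarrow> bool) \<Rightarrow> 'a set \<Rightarrow> bool" where
  "mcocircuit E indep C \<longleftrightarrow> mcircuit E (dual_indep E indep) C"

definition mconn :: "'a set \<Rightarrow> ('a set \<Rightarrow> bool) \<Rightarrow> 'a set \<Rightarrow> int" where
  "mconn E indep X = int (mrank indep X) + int (mrank indep (E - X)) - int (mrank indep E)"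

definition k_separation :: "'a set \<Rightarrow> ('a set \<Rightarrow> bool) \<Rightarrow> nat \<Rightarrow> 'a set \<Rightarrow> bool" where
  "k_separation E indep k X \<longleftrightarrow> X \<subseteq> E \<and> mconn E indep X < int k
     \<and> card X \<ge> k \<and> card (E - X) \<ge> k"

definition n_connected :: "'a set \<Rightarrow> ('a set \<Rightarrow> bool) \<Rightarrow> nat \<Rightarrow> bool" where
  "n_connected E indep n \<longleftrightarrow> (\<forall>k. 0 < k \<and> k < n \<longrightarrow> (\<forall>X. \<not> k_separation E indep k X))"

definition t_spike :: "'a set \<Rightarrow> ('a set \<Rightarrow> bool) \<Rightarrow> nat \<Rightarrow> nat \<Rightarrow> bool" where
  "t_spike E indep t r \<longleftrightarrow> 0 < t \<and> t \<le> r \<and>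
     (\<exists>A :: nat \<Rightarrow> 'a set.
        (\<forall>i\<in>{1..r}. card (A i) = 2)
      \<and> (\<forall>i\<in>{1..r}. \<forall>j\<in>{1..r}. i \<noteq> j \<longrightarrow> A i \<inter> A j = {})
      \<and> (\<Union>i\<in>{1..r}. A i) = E
      \<and> (\<forall>J. J \<subseteq> {1..r} \<and> card J = t \<longrightarrow>
            mcircuit E indep (\<Union>j\<in>J. A j) \<and> mcocircuit E indep (\<Union>j\<in>J. A j)))"

end

theory Submission
  imports Defs
begin

lemma m_finite: "matroid E indep \<Longrightarrow> finite E" by (simp add: matroid_def)
lemma m_sub: "matroid E indep \<Longrightarrow> indep X \<Longrightarrow> X \<subseteq> E" by (simp add: matroid_def)
lemma m_empty: "matroid E indep \<Longrightarrow> indep {}" by (simp add: matroid_def)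
lemma m_down: "matroid E indep \<Longrightarrow> indep Y \<Longrightarrow> X \<subseteq> Y \<Longrightarrow> indep X"
  unfolding matroid_def by blast
lemma m_aug: "matroid E indep \<Longrightarrow> indep X \<Longrightarrow> indep Y \<Longrightarrow> card X < card Y
  \<Longrightarrow> \<exists>e\<in>Y - X. indep (insert e X)"
  unfolding matroid_def by blast

lemma basis_card_ge:
  assumes M: "matroid E indep" and B: "mbasis indep B" and I: "indep I"
  shows "card I \<le> card B"
proof (rule ccontr)
  assume "\<not> card I \<le> card B"
  hence "card B < card I" by simp
  then obtain e where e: "e \<in> I - B" "indep (insert e B)"
    using m_aug[OF M _ I] B unfolding mbasis_def by blast
  hence "insert e B = B" using B unfolding mbasis_def by blast
  thus False using e by blast
qed

lemma big_indep_basis: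
  assumes M: "matroid E indep" and B: "mbasis indep B" and I: "indep I" and c: "card B \<le> card I"
  shows "mbasis indep I"
  unfolding mbasis_def
proof (intro conjI allI impI I)
  fix X assume X: "indep X \<and> I \<subseteq> X"
  have fX: "finite X" using m_sub[OF M] X m_finite[OF M] finite_subset by blast
  have "card X \<le> card B" using basis_card_ge[OF M B] X by blast
  hence "card X \<le> card I" using c by simp
  thus "X = I" using fX X by (metis card_mono card_subset_eq le_antisym)
qed

lemma mrank_fin:
  assumes M: "matroid E indep"
  shows "finite {card I | I. I \<subseteq> X \<and> indep I}"
proof (rule finite_subset[of _ "{..card E}"])
  show "{card I | I. I \<subseteq> X \<and> indep I} \<subseteq> {..card E}"
    using m_sub[OF M] m_finite[OF M] card_mono by fastforce
qed simp

lemma mrank_ge: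
  assumes M: "matroid E indep" and I: "indep I" "I \<subseteq> X"
  shows "card I \<le> mrank indep X"
  unfolding mrank_def by (rule Max_ge[OF mrank_fin[OF M]]) (use I in blast)

lemma mrank_basis:
  assumes M: "matroid E indep" and B: "mbasis indep B"
  shows "mrank indep E = card B"
proof (rule antisym)
  have BE: "B \<subseteq> E" using B m_sub[OF M] unfolding mbasis_def by blast
  show "card B \<le> mrank indep E" using mrank_ge[OF M _ BE] B unfolding mbasis_def by blast
  show "mrank indep E \<le> card B" unfolding mrank_def
  proof (rule Max.boundedI[OF mrank_fin[OF M]])
    show "{card I |I. I \<subseteq> E \<and> indep I} \<noteq> {}" using m_empty[OF M] by blast
    fix a assume "a \<in> {card I |I. I \<subseteq> E \<and> indep I}"
    then show "a \<le> card B" using basis_card_ge[OF M B] by blast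
  qed
qed

lemma circuit_exists:
  assumes fin: "finite Z" and ZE: "Z \<subseteq> E" and nP: "\<not> P Z"
  shows "\<exists>C \<subseteq> Z. mcircuit E P C"
  using fin ZE nP
proof (induction "card Z" arbitrary: Z rule: less_induct)
  case less
  show ?case
  proof (cases "\<forall>D. D \<subset> Z \<longrightarrow> P D")
    case True thus ?thesis using less.prems unfolding mcircuit_def by blast
  next
    case False
    then obtain D where D: "D \<subset> Z" "\<not> P D" by blast
    have c: "card D < card Z" using D less.prems psubset_card_mono by blast
    have "finite D" "D \<subseteq> E" using D less.prems finite_subset by auto
    from less.hyps[OF c this D(2)] obtain C where "C \<subseteq> D" "mcircuit E P C" by blast
    thus ?thesis using D by blast
  qed
qed

lemma max_extend:
  assumes M: "matroid E indep" and J: "indep J" "J \<subseteq> H" and HE: "H \<subseteq> E"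
  shows "\<exists>I. J \<subseteq> I \<and> I \<subseteq> H \<and> indep I \<and> (\<forall>y\<in>H - I. \<not> indep (insert y I))"
  using J
proof (induction "card H - card J" arbitrary: J rule: less_induct)
  case less
  show ?case
  proof (cases "\<forall>y\<in>H - J. \<not> indep (insert y J)")
    case True thus ?thesis using less.prems by blast
  next
    case False
    then obtain y where y: "y \<in> H - J" "indep (insert y J)" by blast
    have fH: "finite H" using HE m_finite[OF M] finite_subset by blast
    have fJ: "finite J" using less.prems fH finite_subset by blast
    have "card (insert y J) \<le> card H" using y less.prems fH by (intro card_mono) auto
    moreover have "card (insert y J) = card J + 1" using y fJ by simp
    ultimately have c: "card H - card (insert y J) < card H - card J" by simp
    from less.hyps[OF c] y less.prems obtain I where
      "insert y J \<subseteq> I \<and> I \<subseteq> H \<and> indep I \<and> (\<forall>y\<in>H - I. \<not> indep (insert y I))" by blast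
    thus ?thesis by blast
  qed
qed

lemma orthog:
  assumes M: "matroid E indep" and C: "mcircuit E indep C" and D: "mcocircuit E indep D"
    and CD: "C \<inter> D = {e}"
  shows False
proof -
  have eC: "e \<in> C" and eD: "e \<in> D" using CD by auto
  have DE: "D \<subseteq> E" and nD: "\<not> dual_indep E indep D"
    and pD: "\<And>D'. D' \<subset> D \<Longrightarrow> dual_indep E indep D'"
    using D unfolding mcocircuit_def mcircuit_def by auto
  have CE: "C \<subseteq> E" and nC: "\<not> indep C" and pC: "\<And>C'. C' \<subset> C \<Longrightarrow> indep C'"
    using C unfolding mcircuit_def by auto
  have "D - {e} \<subset> D" using eD by blast
  then obtain B where B: "mbasis indep B" "D - {e} \<subseteq> E - B"
    using pD unfolding dual_indep_def by blast
  have BE: "B \<subseteq> E" using B(1) m_sub[OF M] unfolding mbasis_def by blast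
  have iCe: "indep (C - {e})" using pC eC by blast
  have "C - {e} \<subseteq> E - D" using CD CE by blast
  from max_extend[OF M iCe this] obtain I where I: "C - {e} \<subseteq> I" "I \<subseteq> E - D" "indep I"
    "\<forall>y\<in>(E - D) - I. \<not> indep (insert y I)" by blast
  show False
  proof (cases "card I < card B")
    case True
    then obtain y where y: "y \<in> B - I" "indep (insert y I)"
      using m_aug[OF M I(3)] B(1) unfolding mbasis_def by blast
    show False
    proof (cases "y = e")
      case True
      have "C \<subseteq> insert y I" using I(1) True by blast
      thus False using m_down[OF M y(2)] nC by blast
    next
      case False
      hence "y \<in> (E - D) - I" using y B(2) BE by blast
      thus False using I(4) y(2) by blast
    qed
  next
    case False
    hence "mbasis indep I" using big_indep_basis[OF M B(1) I(3)] by simp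
    moreover have "D \<subseteq> E - I" using I(2) DE by blast
    ultimately have "dual_indep E indep D" unfolding dual_indep_def using DE by blast
    thus False using nD by blast
  qed
qed

lemma conn_bound:
  assumes M: "matroid E indep" and XE: "X \<subseteq> E" and ZX: "Z \<subseteq> X" and iZ: "indep Z"
    and dZ: "dual_indep E indep Z"
  shows "mconn E indep X \<ge> 2 * int (card Z) - int (card X)"
proof -
  obtain B where B: "mbasis indep B" "Z \<subseteq> E - B" using dZ unfolding dual_indep_def by blast
  have BE: "B \<subseteq> E" using B(1) m_sub[OF M] unfolding mbasis_def by blast
  have fE: "finite E" using m_finite[OF M] .
  have fX: "finite X" using XE fE finite_subset by blast
  have fB: "finite B" using BE fE finite_subset by blast
  have r1: "card Z \<le> mrank indep X" using mrank_ge[OF M iZ ZX] .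
  have iB: "indep B" using B(1) unfolding mbasis_def by blast
  have iBX: "indep (B - X)" using m_down[OF M iB, of "B - X"] by blast
  have "B - X \<subseteq> E - X" using BE by blast
  then have r2: "card (B - X) \<le> mrank indep (E - X)" using mrank_ge[OF M iBX] by blast
  have r3: "mrank indep E = card B" using mrank_basis[OF M B(1)] .
  have "B \<subseteq> (B - X) \<union> (X - Z)" using B(2) by blast
  hence "card B \<le> card ((B - X) \<union> (X - Z))" using fB fX by (intro card_mono) auto
  also have "\<dots> \<le> card (B - X) + card (X - Z)" by (rule card_Un_le)
  finally have c1: "card B \<le> card (B - X) + card (X - Z)" .
  have fZ: "finite Z" using fX ZX finite_subset by blast
  have c2: "card (X - Z) = card X - card Z" using card_Diff_subset[OF fZ ZX] .
  have c3: "card Z \<le> card X" using card_mono[OF fX ZX] .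
  show ?thesis unfolding mconn_def using r1 r2 r3 c1 c2 c3 by linarith
qed

locale tsp =
  fixes E :: "'a set" and indep and t r :: nat and A :: "nat \<Rightarrow> 'a set"
  assumes M: "matroid E indep" and t0: "0 < t" and tr: "t \<le> r"
    and cardA: "\<And>i. i \<in> {1..r} \<Longrightarrow> card (A i) = 2"
    and disj: "\<And>i j. i \<in> {1..r} \<Longrightarrow> j \<in> {1..r} \<Longrightarrow> i \<noteq> j \<Longrightarrow> A i \<inter> A j = {}"
    and UA: "(\<Union>i\<in>{1..r}. A i) = E"
    and circ: "\<And>J. J \<subseteq> {1..r} \<Longrightarrow> card J = t \<Longrightarrow> mcircuit E indep (\<Union>j\<in>J. A j)"
    and cocirc: "\<And>J. J \<subseteq> {1..r} \<Longrightarrow> card J = t \<Longrightarrow> mcocircuit E indep (\<Union>j\<in>J. A j)"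
begin

lemma AE: "i \<in> {1..r} \<Longrightarrow> A i \<subseteq> E" using UA by blast
lemma Ane: "i \<in> {1..r} \<Longrightarrow> A i \<noteq> {}" using cardA by force
lemma Afin: "i \<in> {1..r} \<Longrightarrow> finite (A i)" using cardA card_ge_0_finite by force

lemma C_in_AF:
  assumes F: "F \<subseteq> {1..r}" and G: "G \<subseteq> {1..r}" and FG: "F \<inter> G = {}"
    and cnt: "t - 1 \<le> card ({1..r} - F - G)"
    and f: "\<And>i. i \<in> G \<Longrightarrow> f i \<in> A i"
    and CZ: "C \<subseteq> (\<Union>i\<in>F. A i) \<union> f ` G"
    and orth: "\<And>K. K \<subseteq> {1..r} \<Longrightarrow> card K = t \<Longrightarrow> card (C \<inter> (\<Union>j\<in>K. A j)) \<noteq> 1"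
  shows "C \<subseteq> (\<Union>i\<in>F. A i)"
proof
  fix x assume xC: "x \<in> C"
  show "x \<in> (\<Union>i\<in>F. A i)"
  proof (rule ccontr)
    assume nx: "x \<notin> (\<Union>i\<in>F. A i)"
    then obtain i where i: "i \<in> G" "x = f i" using xC CZ by blast
    obtain T where T: "T \<subseteq> {1..r} - F - G" "card T = t - 1" "finite T"
      using obtain_subset_with_card_n[OF cnt] by blast
    define K where "K = insert i T"
    have iT: "i \<notin> T" using T i by blast
    have cK: "card K = t" unfolding K_def using iT T t0 by simp
    have KR: "K \<subseteq> {1..r}" unfolding K_def using T i G by blast
    have "C \<inter> (\<Union>j\<in>K. A j) = {x}"
    proof
      show "{x} \<subseteq> C \<inter> (\<Union>j\<in>K. A j)" using xC i f unfolding K_def by blast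
      show "C \<inter> (\<Union>j\<in>K. A j) \<subseteq> {x}"
      proof
        fix y assume y: "y \<in> C \<inter> (\<Union>j\<in>K. A j)"
        then obtain j where j: "j \<in> K" "y \<in> A j" by blast
        have jR: "j \<in> {1..r}" using j KR by blast
        from y CZ have "y \<in> (\<Union>i\<in>F. A i) \<or> y \<in> f ` G" by blast
        thus "y \<in> {x}"
        proof
          assume "y \<in> (\<Union>i\<in>F. A i)"
          then obtain m where m: "m \<in> F" "y \<in> A m" by blast
          have "m \<noteq> j" using m j T i FG unfolding K_def by blast
          thus ?thesis using disj[of m j] m j jR F by blast
        next
          assume "y \<in> f ` G"
          then obtain m where m: "m \<in> G" "y = f m" by blast
          have "y \<in> A m" using f m by blast
          hence "m = j" using disj[of m j] m j jR G by blast
          hence "j = i" using m j T unfolding K_def by blast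
          thus ?thesis using m i \<open>m = j\<close> by simp
        qed
      qed
    qed
    thus False using orth[OF KR cK] by simp
  qed
qed

lemma AF_psub:
  assumes F: "F \<subseteq> {1..r}" and cF: "card F < t"
  shows "\<exists>K. K \<subseteq> {1..r} \<and> card K = t \<and> (\<Union>i\<in>F. A i) \<subset> (\<Union>j\<in>K. A j)"
proof -
  have fF: "finite F" using finite_subset[OF F] by simp
  have "card ({1..r} - F) = r - card F" using card_Diff_subset[OF fF F] by simp
  hence "t - card F \<le> card ({1..r} - F)" using tr by simp
  then obtain T where T: "T \<subseteq> {1..r} - F" "card T = t - card F" "finite T"
    using obtain_subset_with_card_n by blast
  have "T \<noteq> {}" using T cF by auto
  then obtain j where j: "j \<in> T" by blast
  define K where "K = F \<union> T"
  have "F \<inter> T = {}" using T by blast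
  hence "card K = card F + card T" unfolding K_def using card_Un_disjoint[OF fF T(3)] by simp
  hence cK: "card K = t" using T(2) cF by simp
  have KR: "K \<subseteq> {1..r}" unfolding K_def using F T by blast
  have sub: "(\<Union>i\<in>F. A i) \<subseteq> (\<Union>j\<in>K. A j)" unfolding K_def by blast
  have jK: "A j \<subseteq> (\<Union>j\<in>K. A j)" unfolding K_def using j by blast
  have jR: "j \<in> {1..r}" "j \<notin> F" using j T by auto
  have "A j \<inter> A i = {}" if "i \<in> F" for i
  proof -
    have "i \<in> {1..r}" "i \<noteq> j" using that F jR by auto
    thus ?thesis using disj[OF jR(1)] by blast
  qed
  hence "A j \<inter> (\<Union>i\<in>F. A i) = {}" by blast
  moreover obtain x where x: "x \<in> A j" using Ane[OF jR(1)] by blast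
  ultimately have "x \<notin> (\<Union>i\<in>F. A i)" "x \<in> (\<Union>j\<in>K. A j)" using jK by blast+
  hence "(\<Union>i\<in>F. A i) \<noteq> (\<Union>j\<in>K. A j)" by metis
  hence "(\<Union>i\<in>F. A i) \<subset> (\<Union>j\<in>K. A j)" using sub by (simp add: psubset_eq)
  thus ?thesis using KR cK by blast
qed

lemma Z_good:
  assumes F: "F \<subseteq> {1..r}" and G: "G \<subseteq> {1..r}" and FG: "F \<inter> G = {}"
    and cF: "card F < t"
    and cnt: "t - 1 \<le> card ({1..r} - F - G)"
    and f: "\<And>i. i \<in> G \<Longrightarrow> f i \<in> A i"
  shows "indep ((\<Union>i\<in>F. A i) \<union> f ` G) \<and> dual_indep E indep ((\<Union>i\<in>F. A i) \<union> f ` G)"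
proof -
  let ?Z = "(\<Union>i\<in>F. A i) \<union> f ` G"
  have "(\<Union>i\<in>F. A i) \<subseteq> E" using AE F by blast
  moreover have "f ` G \<subseteq> E" using AE G f by blast
  ultimately have ZE: "?Z \<subseteq> E" by blast
  have fZ: "finite ?Z" using finite_subset[OF ZE m_finite[OF M]] .
  obtain K where K: "K \<subseteq> {1..r}" "card K = t" "(\<Union>i\<in>F. A i) \<subset> (\<Union>j\<in>K. A j)"
    using AF_psub[OF F cF] by metis
  have 1: "indep ?Z"
  proof (rule ccontr)
    assume "\<not> indep ?Z"
    hence "\<exists>C \<subseteq> ?Z. mcircuit E indep C" by (rule circuit_exists[OF fZ ZE])
    then obtain C where C: "C \<subseteq> ?Z" "mcircuit E indep C" by blast
    have "C \<subseteq> (\<Union>i\<in>F. A i)"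
    proof (rule C_in_AF[OF F G FG cnt f C(1)])
      fix K' assume K': "K' \<subseteq> {1..r}" "card K' = t"
      show "card (C \<inter> (\<Union>j\<in>K'. A j)) \<noteq> 1"
      proof
        assume "card (C \<inter> (\<Union>j\<in>K'. A j)) = 1"
        then obtain e where "C \<inter> (\<Union>j\<in>K'. A j) = {e}" using card_1_singletonE by blast
        thus False using orthog[OF M C(2) cocirc[OF K']] by blast
      qed
    qed
    hence "C \<subset> (\<Union>j\<in>K. A j)" using K(3) by (rule subset_psubset_trans)
    hence "indep C" using circ[OF K(1) K(2)] unfolding mcircuit_def by blast
    thus False using C(2) unfolding mcircuit_def by blast
  qed
  have 2: "dual_indep E indep ?Z"
  proof (rule ccontr)
    assume "\<not> dual_indep E indep ?Z"
    hence "\<exists>C \<subseteq> ?Z. mcircuit E (dual_indep E indep) C" by (rule circuit_exists[OF fZ ZE])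
    then obtain C where C: "C \<subseteq> ?Z" "mcircuit E (dual_indep E indep) C" by blast
    have C2: "mcocircuit E indep C" using C(2) unfolding mcocircuit_def .
    have "C \<subseteq> (\<Union>i\<in>F. A i)"
    proof (rule C_in_AF[OF F G FG cnt f C(1)])
      fix K' assume K': "K' \<subseteq> {1..r}" "card K' = t"
      show "card (C \<inter> (\<Union>j\<in>K'. A j)) \<noteq> 1"
      proof
        assume "card (C \<inter> (\<Union>j\<in>K'. A j)) = 1"
        then obtain e where "C \<inter> (\<Union>j\<in>K'. A j) = {e}" using card_1_singletonE by blast
        hence "(\<Union>j\<in>K'. A j) \<inter> C = {e}" by blast
        thus False using orthog[OF M circ[OF K'] C2] by blast
      qed
    qed
    hence "C \<subset> (\<Union>j\<in>K. A j)" using K(3) by (rule subset_psubset_trans)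
    hence "dual_indep E indep C" using cocirc[OF K(1) K(2)]
      unfolding mcocircuit_def mcircuit_def by blast
    thus False using C(2) unfolding mcircuit_def by blast
  qed
  show ?thesis using 1 2 by blast
qed

lemma card_Z:
  assumes F: "F \<subseteq> {1..r}" and G: "G \<subseteq> {1..r}" and FG: "F \<inter> G = {}"
    and f: "\<And>i. i \<in> G \<Longrightarrow> f i \<in> A i"
  shows "card ((\<Union>i\<in>F. A i) \<union> f ` G) = 2 * card F + card G"
proof -
  have fF: "finite F" and fG: "finite G" using F G finite_subset by auto
  have "card (\<Union>i\<in>F. A i) = (\<Sum>i\<in>F. card (A i))"
  proof (rule card_UN_disjoint[OF fF])
    show "\<forall>i\<in>F. finite (A i)" using F Afin by blast
    show "\<forall>i\<in>F. \<forall>j\<in>F. i \<noteq> j \<longrightarrow> A i \<inter> A j = {}" using F disj by (meson subsetD)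
  qed
  also have "\<dots> = (\<Sum>i\<in>F. 2)" using F cardA by (intro sum.cong) auto
  finally have c1: "card (\<Union>i\<in>F. A i) = 2 * card F" by simp
  have inj: "inj_on f G"
  proof
    fix i j assume "i \<in> G" "j \<in> G" "f i = f j"
    note h = this
    show "i = j"
    proof (rule ccontr)
      assume "i \<noteq> j"
      moreover have "i \<in> {1..r}" "j \<in> {1..r}" using h G by auto
      ultimately have "A i \<inter> A j = {}" using disj by blast
      moreover have "f i \<in> A i" "f j \<in> A j" using f h(1,2) by blast+
      ultimately show False using h(3) by auto
    qed
  qed
  have c2: "card (f ` G) = card G" using card_image[OF inj] .
  have d: "(\<Union>i\<in>F. A i) \<inter> f ` G = {}"
  proof -
    { fix x m i assume "m \<in> F" "x \<in> A m" "i \<in> G" "x = f i"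
      note h = this
      have "m \<noteq> i" using h FG by blast
      moreover have "m \<in> {1..r}" "i \<in> {1..r}" using h F G by auto
      ultimately have "A m \<inter> A i = {}" using disj by blast
      moreover have "f i \<in> A i" using f h by auto
      ultimately have False using h by auto }
    thus ?thesis by blast
  qed
  have fin1: "finite (\<Union>i\<in>F. A i)" using fF F Afin by (intro finite_UN_I) auto
  show ?thesis using card_Un_disjoint[OF fin1 _ d] fG c1 c2 by simp
qed

lemma card3:
  assumes "F \<subseteq> {1..r}" "Q \<subseteq> {1..r}" "F \<inter> Q = {}"
  shows "card ({1..r} - F - Q) + card F + card Q = r"
proof -
  have fF: "finite F" "finite Q" using finite_subset[OF assms(1)] finite_subset[OF assms(2)] by auto
  have "{1..r} - F - Q = {1..r} - (F \<union> Q)" by blast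
  moreover have "card ({1..r} - (F \<union> Q)) = r - card (F \<union> Q)"
    using card_Diff_subset[of "F \<union> Q" "{1..r}"] fF assms by simp
  moreover have "card (F \<union> Q) = card F + card Q" using card_Un_disjoint[OF fF(1) fF(2) assms(3)] .
  moreover have "card (F \<union> Q) \<le> r" using card_mono[of "{1..r}" "F \<union> Q"] assms by simp
  ultimately show ?thesis by simp
qed

lemma count:
  assumes XE: "X \<subseteq> E"
  shows "card X + card {i\<in>{1..r}. A i \<inter> X = {}} \<le> card {i\<in>{1..r}. A i \<subseteq> X} + r"
proof -
  have X_eq: "X = (\<Union>i\<in>{1..r}. X \<inter> A i)" using XE UA by blast
  have cX: "card X = (\<Sum>i\<in>{1..r}. card (X \<inter> A i))"
  proof (subst X_eq, rule card_UN_disjoint)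
    show "\<forall>i\<in>{1..r}. finite (X \<inter> A i)" using Afin by blast
    show "\<forall>i\<in>{1..r}. \<forall>j\<in>{1..r}. i \<noteq> j \<longrightarrow> X \<inter> A i \<inter> (X \<inter> A j) = {}"
    proof (intro ballI impI)
      fix i j assume "i \<in> {1..r}" "j \<in> {1..r}" "i \<noteq> j"
      hence "A i \<inter> A j = {}" by (rule disj)
      thus "X \<inter> A i \<inter> (X \<inter> A j) = {}" by blast
    qed
  qed simp
  have pt: "card (X \<inter> A i) + (if A i \<inter> X = {} then 1 else 0) \<le> 1 + (if A i \<subseteq> X then 1 else 0)"
    if i: "i \<in> {1..r}" for i
  proof -
    consider "A i \<subseteq> X" | "A i \<inter> X = {}" | "\<not> A i \<subseteq> X" "A i \<inter> X \<noteq> {}" by blast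
    thus ?thesis
    proof cases
      case 1
      hence "X \<inter> A i = A i" by blast
      thus ?thesis using 1 cardA[OF i] Ane[OF i] by auto
    next
      case 2
      hence "X \<inter> A i = {}" by blast
      thus ?thesis using 2 by simp
    next
      case 3
      hence "X \<inter> A i \<subset> A i" by blast
      hence "card (X \<inter> A i) < 2" using psubset_card_mono[OF Afin[OF i]] cardA[OF i] by simp
      thus ?thesis using 3 by simp
    qed
  qed
  have "(\<Sum>i\<in>{1..r}. card (X \<inter> A i) + (if A i \<inter> X = {} then 1 else 0))
      \<le> (\<Sum>i\<in>{1..r}. 1 + (if A i \<subseteq> X then 1 else 0))"
    by (rule sum_mono) (use pt in auto)
  moreover have "(\<Sum>i\<in>{1..r}. card (X \<inter> A i) + (if A i \<inter> X = {} then 1 else 0)) =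
     (\<Sum>i\<in>{1..r}. card (X \<inter> A i)) + (\<Sum>i\<in>{1..r}. (if A i \<inter> X = {} then 1 else 0::nat))"
    by (rule sum.distrib)
  moreover have "(\<Sum>i\<in>{1..r}. 1 + (if A i \<subseteq> X then 1 else 0)) =
     r + (\<Sum>i\<in>{1..r}. (if A i \<subseteq> X then 1 else 0::nat))"
    by (subst sum.distrib) simp
  ultimately have "(\<Sum>i\<in>{1..r}. card (X \<inter> A i)) + (\<Sum>i\<in>{1..r}. (if A i \<inter> X = {} then 1 else 0))
      \<le> r + (\<Sum>i\<in>{1..r}. (if A i \<subseteq> X then 1 else 0::nat))"
    by simp
  moreover have "(\<Sum>i\<in>{1..r}. (if A i \<inter> X = {} then 1 else 0::nat)) = card {i\<in>{1..r}. A i \<inter> X = {}}"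
    by (simp add: sum.If_cases Int_def)
  moreover have "(\<Sum>i\<in>{1..r}. (if A i \<subseteq> X then 1 else 0::nat)) = card {i\<in>{1..r}. A i \<subseteq> X}"
    by (simp add: sum.If_cases Int_def)
  ultimately show ?thesis using cX by simp
qed

lemma caseA:
  assumes XE: "X \<subseteq> E" and q: "t - 1 \<le> card {i\<in>{1..r}. A i \<inter> X = {}}"
  shows "mconn E indep X \<ge> int (min (card X) (2 * t - 2))"
proof -
  define P where "P = {i\<in>{1..r}. A i \<subseteq> X}"
  define Q where "Q = {i\<in>{1..r}. A i \<inter> X = {}}"
  have fP: "finite P" unfolding P_def by simp
  obtain F where F: "F \<subseteq> P" "card F = min (card P) (t - 1)"
    using obtain_subset_with_card_n[of "min (card P) (t-1)" P] by auto
  define G where "G = {1..r} - F - Q"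
  define f where "f = (\<lambda>i. SOME x. x \<in> A i \<inter> X)"
  have FR: "F \<subseteq> {1..r}" using F P_def by auto
  have GR: "G \<subseteq> {1..r}" "F \<inter> G = {}" unfolding G_def by auto
  have cF: "card F < t" using F t0 by auto
  have PQ: "P \<inter> Q = {}" using Ane unfolding P_def Q_def by blast
  have QR: "Q \<subseteq> {1..r}" unfolding Q_def by auto
  have FQ0: "F \<inter> Q = {}" using F PQ by blast
  have "{1..r} - F - G = Q" unfolding G_def using FR FQ0 QR by auto
  hence cnt: "t - 1 \<le> card ({1..r} - F - G)" using q Q_def by simp
  have f: "f i \<in> A i \<inter> X" if "i \<in> G" for i
  proof -
    have "A i \<inter> X \<noteq> {}" using that unfolding G_def Q_def by auto
    thus "f i \<in> A i \<inter> X" unfolding f_def by (meson someI_ex ex_in_conv)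
  qed
  hence f1: "\<And>i. i \<in> G \<Longrightarrow> f i \<in> A i" by blast
  have ZX: "(\<Union>i\<in>F. A i) \<union> f ` G \<subseteq> X" using F P_def f by auto
  from Z_good[OF FR GR(1,2) cF cnt f1] have ZZ:
    "indep ((\<Union>i\<in>F. A i) \<union> f ` G)" "dual_indep E indep ((\<Union>i\<in>F. A i) \<union> f ` G)" by auto
  have cZ: "card ((\<Union>i\<in>F. A i) \<union> f ` G) = 2 * card F + card G"
    using card_Z[OF FR GR(1,2) f1] .
  have FQ: "F \<inter> Q = {}" using F PQ by blast
  have cG: "card G + card F + card Q = r" unfolding G_def using card3[OF FR QR FQ] .
  have lb0: "mconn E indep X \<ge> 2 * int (2 * card F + card G) - int (card X)"
    using conn_bound[OF M XE ZX ZZ] cZ by simp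
  hence lb: "mconn E indep X \<ge> 4 * int (card F) + 2 * int (card G) - int (card X)" by simp
  have ct: "card X + card Q \<le> card P + r" using count[OF XE] unfolding P_def Q_def .
  have cPQ: "card P + card Q \<le> r" using card3[of P Q] PQ QR unfolding P_def by fastforce
  have t1: "2 * t - 2 = 2 * (t - 1)" using t0 by simp
  show ?thesis
  proof (cases "card P \<le> t - 1")
    case True
    hence "card F = card P" using F(2) by simp
    hence "mconn E indep X \<ge> int (card X)" using lb ct cPQ cG by linarith
    thus ?thesis by linarith
  next
    case False
    hence "card F = t - 1" using F(2) by simp
    hence "mconn E indep X \<ge> int (2 * (t - 1))" using lb ct cPQ cG by linarith
    thus ?thesis using t1 by linarith
  qed
qed

lemma caseC:
  assumes XE: "X \<subseteq> E" and p: "card {i\<in>{1..r}. A i \<subseteq> X} < t - 1"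
    and q: "card {i\<in>{1..r}. A i \<inter> X = {}} < t - 1"
    and rr: "4 * t - 4 \<le> r"
  shows "mconn E indep X \<ge> int (2 * t - 2)"
proof -
  define P where "P = {i\<in>{1..r}. A i \<subseteq> X}"
  define Q where "Q = {i\<in>{1..r}. A i \<inter> X = {}}"
  define S where "S = {1..r} - P - Q"
  have PR: "P \<subseteq> {1..r}" and QR: "Q \<subseteq> {1..r}" unfolding P_def Q_def by auto
  have PQ: "P \<inter> Q = {}" using Ane unfolding P_def Q_def by blast
  have cS: "card S + card P + card Q = r" unfolding S_def using card3[OF PR QR PQ] .
  have "r - card P - (t - 1) \<le> card S" using cS q Q_def by simp
  then obtain G where G: "G \<subseteq> S" "card G = r - card P - (t - 1)"
    using obtain_subset_with_card_n[of "r - card P - (t - 1)" S] by auto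
  define f where "f = (\<lambda>i. SOME x. x \<in> A i \<inter> X)"
  have GR: "G \<subseteq> {1..r}" "P \<inter> G = {}" using G unfolding S_def by auto
  have cF: "card P < t" using p P_def by simp
  have t2: "2 \<le> t" using p by simp
  have pp: "card P + 2 \<le> t" using p t2 unfolding P_def by linarith
  have r4: "4 * t \<le> r + 4" using rr by linarith
  have gg: "card G + card P + t = r + 1" using G(2) pp r4 by linarith
  have cnt0: "card ({1..r} - P - G) + card P + card G = r" using card3[OF PR GR] .
  hence cnt: "t - 1 \<le> card ({1..r} - P - G)" using gg by linarith
  have f: "f i \<in> A i \<inter> X" if "i \<in> G" for i
  proof -
    have "A i \<inter> X \<noteq> {}" using that G unfolding S_def Q_def by auto
    thus "f i \<in> A i \<inter> X" unfolding f_def by (meson someI_ex ex_in_conv)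
  qed
  hence f1: "\<And>i. i \<in> G \<Longrightarrow> f i \<in> A i" by blast
  have ZX: "(\<Union>i\<in>P. A i) \<union> f ` G \<subseteq> X" using P_def f by auto
  from Z_good[OF PR GR(1,2) cF cnt f1] have ZZ:
    "indep ((\<Union>i\<in>P. A i) \<union> f ` G)" "dual_indep E indep ((\<Union>i\<in>P. A i) \<union> f ` G)" by auto
  have cZ: "card ((\<Union>i\<in>P. A i) \<union> f ` G) = 2 * card P + card G"
    using card_Z[OF PR GR(1,2) f1] .
  have lb0: "mconn E indep X \<ge> 2 * int (2 * card P + card G) - int (card X)"
    using conn_bound[OF M XE ZX ZZ] cZ by simp
  hence lb: "mconn E indep X \<ge> 4 * int (card P) + 2 * int (card G) - int (card X)" by simp
  have ct: "card X + card Q \<le> card P + r" using count[OF XE] unfolding P_def Q_def .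
  have ct2: "card X + card Q \<le> card P + r" using ct .
  have i1: "int (2 * t - 2) = 2 * int t - 2" using t2 by simp
  have "mconn E indep X \<ge> 2 * int t - 2"
  proof -
    have "int (card G) = int r + 1 - int t - int (card P)" using gg by linarith
    moreover have "int (card X) \<le> int (card P) + int r - int (card Q)" using ct2 by linarith
    moreover have "int r + 4 \<ge> 4 * int t" using r4 by linarith
    ultimately show ?thesis using lb by linarith
  qed
  thus ?thesis using i1 by simp
qed

end

theorem lemma6p5:
  fixes E :: "'a set" and indep :: "'a set \<Rightarrow> bool" and t r :: nat
  assumes "matroid E indep"
    and "2 \<le> t"
    and "t_spike E indep t r"
    and "4 * t - 4 \<le> r"
  shows "n_connected E indep (2 * t - 1)"
proof -
  obtain A where A: "(\<forall>i\<in>{1..r}. card (A i) = 2)"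
      "(\<forall>i\<in>{1..r}. \<forall>j\<in>{1..r}. i \<noteq> j \<longrightarrow> A i \<inter> A j = {})"
      "(\<Union>i\<in>{1..r}. A i) = E"
      "(\<forall>J. J \<subseteq> {1..r} \<and> card J = t \<longrightarrow>
            mcircuit E indep (\<Union>j\<in>J. A j) \<and> mcocircuit E indep (\<Union>j\<in>J. A j))"
    and tr: "0 < t" "t \<le> r"
    using assms(3) unfolding t_spike_def by blast
  interpret tsp E indep t r A
  proof unfold_locales
    show "matroid E indep" "0 < t" "t \<le> r" using assms(1) tr by auto
    show "\<And>i. i \<in> {1..r} \<Longrightarrow> card (A i) = 2" using A(1) by blast
    show "\<And>i j. i \<in> {1..r} \<Longrightarrow> j \<in> {1..r} \<Longrightarrow> i \<noteq> j \<Longrightarrow> A i \<inter> A j = {}"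
      using A(2) by blast
    show "(\<Union>i\<in>{1..r}. A i) = E" by (fact A(3))
    show "\<And>J. J \<subseteq> {1..r} \<Longrightarrow> card J = t \<Longrightarrow> mcircuit E indep (\<Union>j\<in>J. A j)"
      using A(4) by blast
    show "\<And>J. J \<subseteq> {1..r} \<Longrightarrow> card J = t \<Longrightarrow> mcocircuit E indep (\<Union>j\<in>J. A j)"
      using A(4) by blast
  qed
  show ?thesis unfolding n_connected_def
  proof (intro allI impI notI)
    fix k X assume k: "0 < k \<and> k < 2 * t - 1" and sep: "k_separation E indep k X"
    have XE: "X \<subseteq> E" and lt: "mconn E indep X < int k" and cX: "k \<le> card X"
      and cY: "k \<le> card (E - X)" using sep unfolding k_separation_def by auto
    have k2: "k \<le> 2 * t - 2" using k assms(2) by linarith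
    consider "t - 1 \<le> card {i\<in>{1..r}. A i \<inter> X = {}}"
      | "t - 1 \<le> card {i\<in>{1..r}. A i \<subseteq> X}"
      | "card {i\<in>{1..r}. A i \<subseteq> X} < t - 1" "card {i\<in>{1..r}. A i \<inter> X = {}} < t - 1"
      by linarith
    thus False
    proof cases
      case 1
      from caseA[OF XE 1] show False using lt cX k2 by linarith
    next
      case 2
      have "{i\<in>{1..r}. A i \<inter> (E - X) = {}} = {i\<in>{1..r}. A i \<subseteq> X}"
      proof (rule Collect_cong)
        fix i show "(i \<in> {1..r} \<and> A i \<inter> (E - X) = {}) = (i \<in> {1..r} \<and> A i \<subseteq> X)"
          using AE[of i] by blast
      qed
      hence "t - 1 \<le> card {i\<in>{1..r}. A i \<inter> (E - X) = {}}" using 2 by simp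
      from caseA[OF _ this] have "mconn E indep (E - X) \<ge> int (min (card (E - X)) (2 * t - 2))"
        by blast
      moreover have "E - (E - X) = X" using XE by blast
      ultimately have "mconn E indep X \<ge> int (min (card (E - X)) (2 * t - 2))"
        unfolding mconn_def by simp
      thus False using lt cY k2 by linarith
    next
      case 3
      from caseC[OF XE 3 assms(4)] show False using lt k2 by linarith
    qed
  qed
qed

end
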